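(* Let $\mathcal{H}=(V,E)$ be a linear hypergraph with $n$ vertices and let $k=\mathrm{ar}(\mathcal{H})$ be its antirank. If $k^2>n$ then $$|E|\le \frac{n(k-1)}{k^2-n}\qquad\text{and}\qquad \Delta(\mathcal{H})\le k.$$
   Context: A hypergraph $\mathcal{H}=(V,E)$ has a finite vertex set $V$ and a finite set $E$ of nonempty subsets of $V$ (hyperedges). It is linear if $|e\cap e'|\le 1$ for all distinct $e,e'\in E$. The antirank $\mathrm{ar}(\mathcal{H})$ is the minimum cardinality of a hyperedge. $\Delta(\mathcal{H})$ is the maximum over vertices $x$ of the degree $\mathrm{deg}_{\mathcal{H}}(x)$, the number of hyperedges containing $x$. *)

theory Defs
  imports Main Complex_Main
begin

definition hypergraph :: "'a set \<Rightarrow> 'a set set \<Rightarrow> bool" where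
  "hypergraph V E \<longleftrightarrow> finite V \<and> (\<forall>e\<in>E. e \<noteq> {} \<and> e \<subseteq> V)"

definition linear_hypergraph :: "'a set \<Rightarrow> 'a set set \<Rightarrow> bool" where
  "linear_hypergraph V E \<longleftrightarrow> hypergraph V E \<and>
     (\<forall>e\<in>E. \<forall>e'\<in>E. e \<noteq> e' \<longrightarrow> card (e \<inter> e') \<le> 1)"

text \<open>Antirank: minimum cardinality of a hyperedge (meaningful for E nonempty).\<close>
definition antirank :: "'a set set \<Rightarrow> nat" where
  "antirank E = Min (card ` E)"

definition hdegree :: "'a set set \<Rightarrow> 'a \<Rightarrow> nat" where
  "hdegree E x = card {e \<in> E. x \<in> e}"

definition max_degree :: "'a set \<Rightarrow> 'a set set \<Rightarrow> nat" where
  "max_degree V E = Max (hdegree E ` V)"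

end

theory Submission
  imports Defs
begin

lemma cs_sum:
  fixes D :: "'a \<Rightarrow> real"
  assumes "finite V"
  shows "(\<Sum>x\<in>V. D x)^2 \<le> real (card V) * (\<Sum>x\<in>V. (D x)^2)"
proof -
  have "0 \<le> (\<Sum>x\<in>V. \<Sum>y\<in>V. (D x - D y)^2)"
    by (intro sum_nonneg) auto
  also have "\<dots> = (\<Sum>x\<in>V. \<Sum>y\<in>V. (D x)^2 + (D y)^2 - 2 * D x * D y)"
    by (simp add: power2_eq_square algebra_simps)
  also have "\<dots> = 2 * real (card V) * (\<Sum>x\<in>V. (D x)^2) - 2 * (\<Sum>x\<in>V. D x)^2"
    by (simp add: sum.distrib sum_subtractf sum_distrib_left sum_distrib_right
        power2_eq_square algebra_simps)
  finally show ?thesis by simp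
qed

lemma deg_sum:
  assumes "finite E"
  shows "real (hdegree E x) = (\<Sum>e\<in>E. if x \<in> e then 1 else 0)"
  using assms by (simp add: hdegree_def sum.If_cases Int_def)

theorem lemma3p1:
  fixes V :: "'a set" and E :: "'a set set" and n k :: nat
  assumes "linear_hypergraph V E"
    and "E \<noteq> {}"
    and "n = card V"
    and "k = antirank E"
    and "k^2 > n"
  shows "real (card E) \<le> real n * (real k - 1) / (real k ^ 2 - real n)
         \<and> max_degree V E \<le> k"
proof -
  have finV: "finite V" and sub: "\<And>e. e \<in> E \<Longrightarrow> e \<subseteq> V" and ne: "\<And>e. e \<in> E \<Longrightarrow> e \<noteq> {}"
    and lin: "\<And>e f. e \<in> E \<Longrightarrow> f \<in> E \<Longrightarrow> e \<noteq> f \<Longrightarrow> card (e \<inter> f) \<le> 1"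
    using assms(1) unfolding linear_hypergraph_def hypergraph_def by auto
  have finE: "finite E" using sub finV
    by (meson Pow_iff finite_Pow_iff finite_subset subsetI)
  have fine: "\<And>e. e \<in> E \<Longrightarrow> finite e" using sub finV finite_subset by blast
  have kle: "\<And>e. e \<in> E \<Longrightarrow> k \<le> card e"
    using assms(4) finE unfolding antirank_def by simp
  obtain e0 where e0: "e0 \<in> E" "card e0 = k"
    using assms(4) finE assms(2) unfolding antirank_def
    by (metis (mono_tags, lifting) Min_in finite_imageI image_iff image_is_empty)
  have k1: "k \<ge> 1" using e0 ne fine
    by (metis card_0_eq less_one linorder_not_less)
  have nk: "k \<le> n" using e0 sub finV assms(3) card_mono by metis
  have Vne: "V \<noteq> {}" using e0 sub ne k1 by blast
  have degb: "hdegree E x \<le> k" if xV: "x \<in> V" for x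
  proof -
    define F where "F = {e \<in> E. x \<in> e}"
    have finF: "finite F" using finE F_def by simp
    have disj: "\<forall>e\<in>F. \<forall>f\<in>F. e \<noteq> f \<longrightarrow> (e - {x}) \<inter> (f - {x}) = {}"
    proof (intro ballI impI)
      fix e f assume ef: "e \<in> F" "f \<in> F" "e \<noteq> f"
      have "card (e \<inter> f) \<le> 1" using lin ef F_def by auto
      moreover have "x \<in> e \<inter> f" using ef F_def by auto
      moreover have "finite (e \<inter> f)" using ef F_def fine by auto
      ultimately have "e \<inter> f = {x}"
        by (metis card_le_Suc0_iff_eq One_nat_def singletonD subsetI subset_antisym insertI1 emptyE)
      thus "(e - {x}) \<inter> (f - {x}) = {}" by auto
    qed
    have inj: "inj_on (\<lambda>e. e - {x}) F"
    proof (rule inj_onI)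
      fix e f assume "e \<in> F" "f \<in> F" "e - {x} = f - {x}"
      thus "e = f" using F_def by auto
    qed
    have "card (\<Union>e\<in>F. e - {x}) = (\<Sum>e\<in>F. card (e - {x}))"
      using finF fine F_def disj by (intro card_UN_disjoint) auto
    moreover have "(\<Union>e\<in>F. e - {x}) \<subseteq> V - {x}" using sub F_def by auto
    ultimately have "(\<Sum>e\<in>F. card (e - {x})) \<le> n - 1"
      using finV assms(3) xV
      by (metis card_Diff_singleton card_mono finite_Diff)
    moreover have "(\<Sum>e\<in>F. card (e - {x})) \<ge> (\<Sum>e\<in>F. k - 1)"
      using kle fine F_def by (intro sum_mono) (auto simp: card_Diff_singleton diff_le_mono)
    ultimately have "card F * (k - 1) \<le> n - 1" by simp
    hence "card F * (k - 1) < (k+1) * (k - 1)"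
      using assms(5) k1 nk by (simp add: power2_eq_square algebra_simps) 
    hence "card F < k + 1" by (meson mult_less_cancel2)
    thus ?thesis unfolding hdegree_def F_def by simp
  qed
  have md: "max_degree V E \<le> k"
    unfolding max_degree_def using finV Vne degb by simp
  define m where "m = real (card E)"
  define D where "D x = real (hdegree E x)" for x
  define S where "S = (\<Sum>x\<in>V. D x)"
  have S_eq: "S = (\<Sum>e\<in>E. real (card e))"
  proof -
    have "S = (\<Sum>x\<in>V. \<Sum>e\<in>E. if x \<in> e then 1 else 0)"
      unfolding S_def D_def using deg_sum[OF finE] by simp
    also have "\<dots> = (\<Sum>e\<in>E. \<Sum>x\<in>V. if x \<in> e then 1 else 0)" by (rule sum.swap)
    also have "\<dots> = (\<Sum>e\<in>E. real (card e))"
    proof (rule sum.cong)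
      fix e assume "e \<in> E"
      hence "V \<inter> e = e" using sub by auto
      thus "(\<Sum>x\<in>V. if x \<in> e then 1 else 0) = real (card e)"
        using finV by (simp add: sum.If_cases)
    qed simp
    finally show ?thesis .
  qed
  have Smk: "S \<ge> m * k"
  proof -
    have "(\<Sum>e\<in>E. real (card e)) \<ge> (\<Sum>e\<in>E. real k)" using kle by (intro sum_mono) auto
    thus ?thesis using S_eq m_def by (simp add: mult.commute)
  qed
  have Q: "(\<Sum>x\<in>V. (D x)^2) \<le> S + m * (m - 1)"
  proof -
    have "(\<Sum>x\<in>V. (D x)^2) = (\<Sum>x\<in>V. \<Sum>e\<in>E. \<Sum>f\<in>E. (if x \<in> e then 1 else 0) * (if x \<in> f then 1 else 0))"
      unfolding D_def using deg_sum[OF finE]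
      by (simp add: power2_eq_square sum_product)
    also have "\<dots> = (\<Sum>e\<in>E. \<Sum>f\<in>E. \<Sum>x\<in>V. (if x \<in> e then 1 else 0) * (if x \<in> f then 1 else 0))"
      by (simp add: sum.swap[of _ V] sum.swap[of _ V E])
    also have "\<dots> = (\<Sum>e\<in>E. \<Sum>f\<in>E. real (card (e \<inter> f)))"
    proof (intro sum.cong refl)
      fix e f assume "e \<in> E" "f \<in> E"
      hence "V \<inter> (e \<inter> f) = e \<inter> f" using sub by auto
      hence "(\<Sum>x\<in>V. (if x \<in> e then 1 else 0) * (if x \<in> f then 1 else 0)) = (\<Sum>x\<in>V. if x \<in> e \<inter> f then 1 else (0::real))"
        by (intro sum.cong) auto
      also have "\<dots> = real (card (e \<inter> f))"
        using finV \<open>V \<inter> (e \<inter> f) = e \<inter> f\<close> by (simp add: sum.If_cases Int_def[symmetric])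
      finally show "(\<Sum>x\<in>V. (if x \<in> e then 1 else 0) * (if x \<in> f then 1 else 0)) = real (card (e \<inter> f))" .
    qed
    also have "\<dots> \<le> (\<Sum>e\<in>E. real (card e) + (m - 1))"
    proof (rule sum_mono)
      fix e assume eE: "e \<in> E"
      have split: "(\<Sum>f\<in>E. real (card (e \<inter> f))) = real (card (e \<inter> e)) + (\<Sum>f\<in>E - {e}. real (card (e \<inter> f)))"
        using finE eE by (simp add: sum.remove)
      have cE: "card E \<ge> 1" using finE eE by (metis One_nat_def Suc_leI card_gt_0_iff empty_iff)
      have "(\<Sum>f\<in>E - {e}. real (card (e \<inter> f))) \<le> (\<Sum>f\<in>E - {e}. 1)"
        using lin eE by (intro sum_mono) auto
      also have "\<dots> = m - 1" using finE eE m_def cE by (simp add: card_Diff_singleton of_nat_diff)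
      finally show "(\<Sum>f\<in>E. real (card (e \<inter> f))) \<le> real (card e) + (m - 1)"
        using split by simp
    qed
    also have "\<dots> = S + m * (m - 1)" using S_eq m_def by (simp add: sum.distrib)
    finally show ?thesis .
  qed
  have CS: "S^2 \<le> real n * (S + m * (m - 1))"
  proof -
    have "S^2 \<le> real n * (\<Sum>x\<in>V. (D x)^2)" using cs_sum[OF finV] S_def assms(3) by simp
    also have "\<dots> \<le> real n * (S + m * (m - 1))" using Q by (intro mult_left_mono) auto
    finally show ?thesis .
  qed
  have m1: "m \<ge> 1" using m_def finE assms(2)
    by (simp add: Suc_leI card_gt_0_iff)
  have kr: "real k ^ 2 > real n" using assms(5) by (metis of_nat_less_iff of_nat_power)
  have n1: "real n \<ge> 1" using nk k1 by simp
  have key: "m * (real k ^ 2 - real n) \<le> real n * (real k - 1)"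
  proof (cases "2 * (m * k) \<ge> real n")
    case True
    have "(S - m*k) * (S + m*k - n) \<ge> 0" using True Smk by (intro mult_nonneg_nonneg) auto
    hence "(m*k)^2 - n*(m*k) \<le> S^2 - n * S" by (simp add: algebra_simps power2_eq_square)
    also have "\<dots> \<le> n * (m * (m - 1))" using CS by (simp add: algebra_simps)
    finally have "m * (m * k^2 - n*k) \<le> m * (n * (m - 1))"
      by (simp add: algebra_simps power2_eq_square)
    hence "m * k^2 - n*k \<le> n * (m - 1)" using m1 by simp
    thus ?thesis by (simp add: algebra_simps)
  next
    case False
    have kpos: "real k \<ge> 1" using k1 by simp
    have "m * (real k ^ 2 - real n) * (2 * real k) = (2 * (m * real k)) * (real k ^ 2 - real n)" by simp
    also have "\<dots> \<le> n * (real k ^ 2 - real n)" using False kr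
      by (intro mult_right_mono) auto
    also have "\<dots> \<le> n * ((real k - 1) * (2 * real k))"
    proof (rule mult_left_mono)
      have "(real k - 1)^2 + real n - 1 \<ge> 0" using n1 zero_le_power2[of "real k - 1"] by linarith
      thus "real k ^ 2 - real n \<le> (real k - 1) * (2 * real k)"
        by (simp add: power2_eq_square algebra_simps)
    qed simp
    finally have "(m * (real k ^ 2 - real n)) * (2 * real k) \<le> (n * (real k - 1)) * (2 * real k)" by (simp add: algebra_simps)
    thus ?thesis using kpos by simp
  qed
  have "m \<le> real n * (real k - 1) / (real k ^ 2 - real n)"
    using key kr by (simp add: pos_le_divide_eq)
  thus ?thesis using md m_def by simp
qed

end
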